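(* Let $M_n$ be the number of Motzkin paths of length $n$ and let $b_n$ be the number of those Motzkin paths of length $n$ that have no horizontal step on level equal to their height. Then $$\lim_{n\to\infty}\frac{b_n}{M_n}=\frac12;$$ equivalently, asymptotically half of the Motzkin paths of length $n$ have a horizontal step on their maximal level (i.e. have odd amplitude) and half do not.
   Context: A Motzkin path of length $n$ is a sequence of $n$ steps, each an up-step $(1,1)$, a down-step $(1,-1)$ or a horizontal step $(1,0)$, starting at $(0,0)$, ending at $(n,0)$, and never going below the $x$-axis. Its height $h$ is the maximal $y$-coordinate reached. A horizontal step on level $j$ is a horizontal step from $(x,j)$ to $(x+1,j)$. The amplitude of a Motzkin path of height $h$ is $2h+1$ if it has a horizontal step on level $h$, and $2h$ otherwise. *)

theory Defs
  imports Complex_Main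
begin

datatype step = U | D | H

definition delta :: "step \<Rightarrow> int" where
  "delta s = (case s of U \<Rightarrow> 1 | D \<Rightarrow> -1 | H \<Rightarrow> 0)"

definition level :: "step list \<Rightarrow> nat \<Rightarrow> int" where
  "level p k = (\<Sum>i<k. delta (p ! i))"

definition motzkin :: "step list \<Rightarrow> bool" where
  "motzkin p \<longleftrightarrow> level p (length p) = 0 \<and> (\<forall>k \<le> length p. level p k \<ge> 0)"

definition height :: "step list \<Rightarrow> int" where
  "height p = Max ((level p) ` {0..length p})"

definition has_hstep_on :: "step list \<Rightarrow> int \<Rightarrow> bool" where
  "has_hstep_on p j \<longleftrightarrow> (\<exists>k < length p. p ! k = H \<and> level p k = j)"

definition motzkin_paths :: "nat \<Rightarrow> step list set" where
  "motzkin_paths n = {p. length p = n \<and> motzkin p}"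

definition M :: "nat \<Rightarrow> nat" where
  "M n = card (motzkin_paths n)"

definition b :: "nat \<Rightarrow> nat" where
  "b n = card {p \<in> motzkin_paths n. \<not> has_hstep_on p (height p)}"

end

theory Submission
  imports Defs "HOL-Real_Asymp.Real_Asymp"
begin

lemma level_0[simp]: "level p 0 = 0" by (simp add: level_def)
lemma level_Suc: "level p (Suc k) = level p k + delta (p!k)" by (simp add: level_def)
lemma level_append: "k \<le> length p \<Longrightarrow> level (p @ q) k = level p k"
  unfolding level_def by (intro sum.cong) (auto simp: nth_append)
lemma level_snoc: "level (p @ [s]) (Suc (length p)) = level p (length p) + delta s"
  by (simp add: level_Suc level_append)

definition W :: "nat \<Rightarrow> nat \<Rightarrow> int \<Rightarrow> step list set" where
 "W P n l = {p. length p = n \<and> (\<forall>k\<le>n. 0 \<le> level p k \<and> 2*level p k + 3 \<le> int P)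
     \<and> level p n = l \<and> (\<forall>k<n. p!k = H \<longrightarrow> 2*level p k + 4 \<le> int P)}"

lemma UNIV_step: "(UNIV :: step set) = {U,D,H}" using step.exhaust by auto

lemma finite_len: "finite {p::step list. length p = n}"
proof -
  have "finite {p::step list. set p \<subseteq> UNIV \<and> length p = n}"
    by (rule finite_lists_length_eq) (simp add: UNIV_step)
  then show ?thesis by simp
qed

lemma finite_W: "finite (W P n l)"
  by (rule finite_subset[OF _ finite_len[of n]]) (auto simp: W_def)

lemma W_Suc:
  assumes l0: "0 \<le> l" and lP: "2*l+3 \<le> int P"
  shows "W P (Suc n) l = (\<lambda>p. p@[U]) ` W P n (l-1) \<union> (\<lambda>p. p@[D]) ` W P n (l+1)
           \<union> (if 2*l+4 \<le> int P then (\<lambda>p. p@[H]) ` W P n l else {})"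
proof (intro equalityI subsetI)
  fix p assume p: "p \<in> W P (Suc n) l"
  then have len: "length p = Suc n" by (simp add: W_def)
  then have "p \<noteq> []" by auto
  define q where "q = butlast p"
  define s where "s = last p"
  have pq: "p = q @ [s]" using \<open>p \<noteq> []\<close> by (simp add: q_def s_def)
  have lq: "length q = n" using len by (simp add: q_def)
  have lev: "\<And>k. k \<le> n \<Longrightarrow> level p k = level q k" using pq lq by (simp add: level_append)
  have lend: "level p (Suc n) = level q n + delta s" using pq lq level_snoc[of q s] by simp
  have nth: "\<And>k. k < n \<Longrightarrow> p!k = q!k" using pq lq by (simp add: nth_append)
  have pn: "p!n = s" using pq lq by (metis nth_append_length)
  from p have C1: "\<forall>k\<le>Suc n. 0 \<le> level p k \<and> 2*level p k + 3 \<le> int P"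
    and C2: "level p (Suc n) = l" and C3: "\<forall>k<Suc n. p!k = H \<longrightarrow> 2*level p k + 4 \<le> int P"
    by (auto simp: W_def)
  have Q1: "\<forall>k\<le>n. 0 \<le> level q k \<and> 2*level q k + 3 \<le> int P"
  proof (intro allI impI)
    fix k assume k: "k \<le> n"
    then show "0 \<le> level q k \<and> 2*level q k + 3 \<le> int P" using C1[rule_format, of k] lev[OF k] by simp
  qed
  have Q3: "\<forall>k<n. q!k = H \<longrightarrow> 2*level q k + 4 \<le> int P"
  proof (intro allI impI)
    fix k assume k: "k < n" "q!k = H"
    then show "2*level q k + 4 \<le> int P" using C3[rule_format, of k] lev[of k] nth[of k] by simp
  qed
  show "p \<in> (\<lambda>p. p@[U]) ` W P n (l-1) \<union> (\<lambda>p. p@[D]) ` W P n (l+1)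
           \<union> (if 2*l+4 \<le> int P then (\<lambda>p. p@[H]) ` W P n l else {})"
  proof (cases s)
    case U
    then have "q \<in> W P n (l-1)" using Q1 Q3 lq lend C2 by (auto simp: W_def delta_def)
    then show ?thesis using pq U by auto
  next
    case D
    then have "q \<in> W P n (l+1)" using Q1 Q3 lq lend C2 by (auto simp: W_def delta_def)
    then show ?thesis using pq D by auto
  next
    case H
    then have "q \<in> W P n l" using Q1 Q3 lq lend C2 by (auto simp: W_def delta_def)
    moreover have "2*l+4 \<le> int P" using C3[rule_format, of n] pn H lev[of n] lend C2
      by (auto simp: delta_def)
    ultimately show ?thesis using pq H by auto
  qed
next
  fix p assume p: "p \<in> (\<lambda>p. p@[U]) ` W P n (l-1) \<union> (\<lambda>p. p@[D]) ` W P n (l+1)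
           \<union> (if 2*l+4 \<le> int P then (\<lambda>p. p@[H]) ` W P n l else {})"
  then obtain q s l' where pq: "p = q @ [s]" and q: "q \<in> W P n l'"
    and sl: "l' + delta s = l" and sH: "s = H \<Longrightarrow> 2*l+4 \<le> int P"
    by (auto simp: delta_def split: if_splits)
  have lq: "length q = n" using q by (simp add: W_def)
  have lev: "\<And>k. k \<le> n \<Longrightarrow> level p k = level q k" using pq lq by (simp add: level_append)
  have lend: "level p (Suc n) = l" using pq lq level_snoc[of q s] q sl by (simp add: W_def)
  have nth: "\<And>k. k < n \<Longrightarrow> p!k = q!k" using pq lq by (simp add: nth_append)
  have pn: "p!n = s" using pq lq by (metis nth_append_length)
  have "\<forall>k\<le>Suc n. 0 \<le> level p k \<and> 2*level p k + 3 \<le> int P"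
  proof (intro allI impI)
    fix k assume "k \<le> Suc n"
    then consider "k \<le> n" | "k = Suc n" by linarith
    then show "0 \<le> level p k \<and> 2*level p k + 3 \<le> int P"
    proof cases
      case 1 then show ?thesis using q lev by (auto simp: W_def)
    next
      case 2 then show ?thesis using lend l0 lP by simp
    qed
  qed
  moreover have "\<forall>k<Suc n. p!k = H \<longrightarrow> 2*level p k + 4 \<le> int P"
  proof (intro allI impI)
    fix k assume k: "k < Suc n" and pk: "p!k = H"
    then consider "k < n" | "k = n" by linarith
    then show "2*level p k + 4 \<le> int P"
    proof cases
      case 1 then show ?thesis using q lev nth pk by (auto simp: W_def)
    next
      case 2
      then have "s = H" using pk pn by simp
      then have "level q n = l" using q sl by (simp add: W_def delta_def)
      then show ?thesis using 2 lev sH \<open>s = H\<close> by simp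
    qed
  qed
  ultimately show "p \<in> W P (Suc n) l" using pq lq lend by (simp add: W_def)
qed

lemma card_W_Suc:
  assumes "0 \<le> l" "2*l+3 \<le> int P"
  shows "card (W P (Suc n) l) = card (W P n (l-1)) + card (W P n (l+1))
           + (if 2*l+4 \<le> int P then card (W P n l) else 0)"
proof -
  have inj: "inj (\<lambda>p. p @ [s])" for s :: step by (rule injI) simp
  have ci: "card ((\<lambda>p. p@[s]) ` A) = card A" for s and A :: "step list set"
    by (rule card_image) (rule inj_on_subset[OF inj], simp)
  have fin: "finite ((\<lambda>p. p@[s]) ` W P n l')" for s l' by (simp add: finite_W)
  have d1: "(\<lambda>p. p@[U]) ` W P n (l-1) \<inter> (\<lambda>p. p@[D]) ` W P n (l+1) = {}" by auto
  have d2: "((\<lambda>p. p@[U]) ` W P n (l-1) \<union> (\<lambda>p. p@[D]) ` W P n (l+1)) \<inter>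
     (if 2*l+4 \<le> int P then (\<lambda>p. p@[H]) ` W P n l else {}) = {}" by auto
  show ?thesis
    unfolding W_Suc[OF assms]
    apply (subst card_Un_disjoint)
       apply (simp add: finite_W)
      apply (simp add: finite_W)
     apply (rule d2)
    apply (subst card_Un_disjoint)
       apply (simp add: finite_W)
      apply (simp add: finite_W)
     apply (rule d1)
    apply (simp add: ci)
    done
qed

lemma W_neg: "l < 0 \<Longrightarrow> W P n l = {}"
  by (auto simp: W_def)
lemma W_top: "2*l+3 > int P \<Longrightarrow> W P n l = {}"
  by (auto simp: W_def)
lemma W_0: "W P 0 l = (if l = 0 \<and> 3 \<le> int P then {[]} else {})"
  by (auto simp: W_def)

definition alpha :: "nat \<Rightarrow> nat \<Rightarrow> real" where "alpha P j = 2*pi*real j/real P"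

definition V :: "nat \<Rightarrow> nat \<Rightarrow> int \<Rightarrow> real" where
  "V P n l = 2/real P * (\<Sum>j<P. (1+2*cos(alpha P j))^n * sin(alpha P j) * sin(real_of_int (l+1) * alpha P j))"

lemma sum_cos_roots:
  assumes P: "P > 0"
  shows "(\<Sum>j<P. cos(real k * alpha P j)) = (if P dvd k then real P else 0)"
proof (cases "P dvd k")
  case True
  then obtain m where k: "k = P*m" by auto
  have "cos(real k * alpha P j) = 1" for j
  proof -
    have "real k * alpha P j = 2 * real (m*j) * pi" using P by (simp add: k alpha_def field_simps)
    then show ?thesis by (simp only: cos_2npi)
  qed
  then show ?thesis using True by simp
next
  case False
  define z where "z = cis (2*pi*real k/real P)"
  have z1: "z \<noteq> 1"
  proof
    assume "z = 1"
    then have "cos (2*pi*real k/real P) = 1" by (simp add: z_def complex_eq_iff)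
    then obtain m :: int where m: "2*pi*real k/real P = m * 2 * pi" by (auto simp: cos_one_2pi_int)
    then have "real k = real_of_int m * real P" using P by (simp add: field_simps)
    then have "int k = m * int P" by (metis of_int_eq_iff of_int_mult of_int_of_nat_eq)
    then have "int P dvd int k" by simp
    then show False using False by simp
  qed
  have zP: "z ^ P = 1"
  proof -
    have "z ^ P = cis (real P * (2*pi*real k/real P))" by (simp add: z_def DeMoivre)
    also have "\<dots> = cis (2*pi*real k)" using P by simp
    also have "\<dots> = 1" by (simp add: cis_multiple_2pi)
    finally show ?thesis .
  qed
  have "(\<Sum>j<P. z^j) = 0" using z1 zP by (simp add: geometric_sum)
  then have "Re (\<Sum>j<P. z^j) = 0" by simp
  moreover have "Re (z^j) = cos(real k * alpha P j)" for j
    by (simp add: z_def DeMoivre alpha_def field_simps)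
  ultimately show ?thesis using False by simp
qed

lemma V_Suc: "V P (Suc n) l = V P n (l-1) + V P n l + V P n (l+1)"
proof -
  have t: "(1+2*cos a)^(Suc n) * sin a * sin (real_of_int (l+1) * a) =
    (1+2*cos a)^n * sin a * sin (real_of_int (l-1+1) * a) +
    (1+2*cos a)^n * sin a * sin (real_of_int (l+1) * a) +
    (1+2*cos a)^n * sin a * sin (real_of_int (l+1+1) * a)" for a
  proof -
    define x where "x = real_of_int (l+1) * a"
    have e1: "real_of_int (l-1+1) * a = x - a" by (simp add: x_def algebra_simps)
    have e2: "real_of_int (l+1+1) * a = x + a" by (simp add: x_def algebra_simps)
    show ?thesis unfolding e1 e2 x_def[symmetric]
      by (simp add: sin_add sin_diff algebra_simps)
  qed
  define f where "f = (\<lambda>m l' (j::nat). (1+2*cos(alpha P j))^m * sin(alpha P j) * sin(real_of_int (l'+1) * alpha P j))"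
  have "(\<Sum>j<P. f (Suc n) l j) = (\<Sum>j<P. f n (l-1) j) + (\<Sum>j<P. f n l j) + (\<Sum>j<P. f n (l+1) j)"
    unfolding f_def t by (simp only: sum.distrib)
  then show ?thesis unfolding V_def f_def by (simp add: distrib_left)
qed

lemma V_m1: "V P n (-1) = 0" by (simp add: V_def)

lemma V_top_even:
  assumes "int P = 2*l+4" "0 \<le> l"
  shows "V P n (l+1) = 0"
proof -
  have "sin (real_of_int (l+1+1) * alpha P j) = 0" for j
  proof -
    have "real_of_int (l+1+1) * alpha P j = real j * pi"
    proof -
      have "real P = 2*real_of_int l + 4" using assms by (metis of_int_of_nat_eq of_int_add of_int_mult of_int_numeral)
      moreover have "2*real_of_int l + 4 > 0" using \<open>0 \<le> l\<close> by simp
      ultimately show ?thesis by (simp add: alpha_def field_simps)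
    qed
    then show ?thesis by simp
  qed
  then show ?thesis by (simp add: V_def)
qed

lemma V_top_odd:
  assumes "int P = 2*l+3" "0 \<le> l"
  shows "V P n l + V P n (l+1) = 0"
proof -
  have "sin (real_of_int (l+1) * alpha P j) + sin (real_of_int (l+1+1) * alpha P j) = 0" for j
  proof -
    have RP: "real P = 2*real_of_int l + 3" using assms by (metis of_int_of_nat_eq of_int_add of_int_mult of_int_numeral)
    have D: "2*real_of_int l + 3 > 0" using \<open>0 \<le> l\<close> by simp
    have "(real_of_int (l+1) * alpha P j + real_of_int (l+1+1) * alpha P j)/2
        = (2*real_of_int l + 3) * (2*pi*real j/(2*real_of_int l + 3)) / 2"
      by (simp add: alpha_def RP algebra_simps add_divide_distrib[symmetric])
    also have "\<dots> = real j * pi" using D by simp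
    finally have "(real_of_int (l+1) * alpha P j + real_of_int (l+1+1) * alpha P j)/2 = real j * pi" .
    then show ?thesis by (simp add: sin_plus_sin)
  qed
  note z = this
  define g where "g = (\<lambda>j. (1+2*cos(alpha P j))^n * sin(alpha P j))"
  have "(\<Sum>j<P. g j * sin(real_of_int (l+1) * alpha P j)) + (\<Sum>j<P. g j * sin(real_of_int (l+1+1) * alpha P j))
     = (\<Sum>j<P. g j * (sin(real_of_int (l+1) * alpha P j) + sin(real_of_int (l+1+1) * alpha P j)))"
    by (simp only: sum.distrib[symmetric] distrib_left)
  also have "\<dots> = 0" by (simp only: z mult_zero_right sum.neutral_const)
  finally have "(\<Sum>j<P. g j * sin(real_of_int (l+1) * alpha P j)) + (\<Sum>j<P. g j * sin(real_of_int (l+1+1) * alpha P j)) = 0" .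
  then have "2/real P * (\<Sum>j<P. g j * sin(real_of_int (l+1) * alpha P j)) + 2/real P * (\<Sum>j<P. g j * sin(real_of_int (l+1+1) * alpha P j)) = 0"
    by (simp only: distrib_left[symmetric] mult_zero_right)
  then show ?thesis unfolding V_def g_def by simp
qed

lemma V_0:
  assumes l0: "0 \<le> l" and lP: "2*l+3 \<le> int P"
  shows "V P 0 l = (if l = 0 then 1 else 0)"
proof -
  obtain k where k: "l = int k" using l0 by (metis nonneg_eq_int)
  have P: "P > 0" using lP l0 by linarith
  have e: "sin (alpha P j) * sin ((real_of_int l + 1) * alpha P j) =
      (cos (real k * alpha P j) - cos (real (k+2) * alpha P j))/2" for j
    by (simp add: sin_times_sin k algebra_simps)
  have "V P 0 l = 2/real P * (\<Sum>j<P. (cos (real k * alpha P j) - cos (real (k+2) * alpha P j))/2)"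
    by (simp add: V_def e)
  also have "\<dots> = 2/real P * ((\<Sum>j<P. cos (real k * alpha P j)) - (\<Sum>j<P. cos (real (k+2) * alpha P j)))/2"
    by (simp add: sum_subtractf sum_divide_distrib[symmetric])
  also have "\<dots> = 2/real P * ((if P dvd k then real P else 0) - (if P dvd (k+2) then real P else 0))/2"
    using P sum_cos_roots[OF P, of k] sum_cos_roots[OF P, of "k+2"] by simp
  also have "\<dots> = (if l = 0 then 1 else 0)"
  proof -
    have "\<not> P dvd (k+2)" using lP k by (auto dest: dvd_imp_le)
    moreover have "P dvd k \<longleftrightarrow> k = 0" using lP k by (auto dest: dvd_imp_le)
    ultimately show ?thesis using P k by auto
  qed
  finally show ?thesis .
qed

lemma card_W_V:
  "0 \<le> l \<Longrightarrow> 2*l+3 \<le> int P \<Longrightarrow> real (card (W P n l)) = V P n l"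
proof (induction n arbitrary: l)
  case 0
  then show ?case by (simp add: W_0 V_0)
next
  case (Suc n)
  have c: "real (card (W P (Suc n) l)) = real (card (W P n (l-1))) + real (card (W P n (l+1)))
           + (if 2*l+4 \<le> int P then real (card (W P n l)) else 0)"
    using card_W_Suc[OF Suc.prems] by simp
  have a1: "real (card (W P n (l-1))) = V P n (l-1)"
  proof (cases "l = 0")
    case True then show ?thesis by (simp add: W_neg V_m1)
  next
    case False then show ?thesis using Suc by simp
  qed
  have IHl: "real (card (W P n l)) = V P n l" using Suc by simp
  show ?case
  proof (cases "2*(l+1)+3 \<le> int P")
    case True
    then show ?thesis using c a1 IHl Suc.IH[of "l+1"] Suc.prems by (simp add: V_Suc)
  next
    case False
    then have e: "W P n (l+1) = {}" by (simp add: W_top)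
    from False Suc.prems have "int P = 2*l+4 \<or> int P = 2*l+3" by arith
    then show ?thesis
    proof (elim disjE)
      assume 1: "int P = 2*l+4" then show ?thesis using c a1 IHl e V_top_even[OF 1 Suc.prems(1)] by (simp add: V_Suc)
    next
      assume 2: "int P = 2*l+3" then show ?thesis using c a1 e V_top_odd[OF 2 Suc.prems(1), of n] by (simp add: V_Suc)
    qed
  qed
qed

lemma delta_le: "delta s \<le> 1" by (cases s) (auto simp: delta_def)

lemma level_le: "level p k \<le> int k"
  by (induction k) (auto simp: level_Suc intro: order_trans[OF add_mono[OF _ delta_le]])

lemma height_facts:
  shows "\<And>k. k \<le> length p \<Longrightarrow> level p k \<le> height p"
    and "\<exists>k\<le>length p. level p k = height p"
proof -
  have fin: "finite (level p ` {0..length p})" by simp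
  have ne: "level p ` {0..length p} \<noteq> {}" by simp
  show "\<And>k. k \<le> length p \<Longrightarrow> level p k \<le> height p"
    unfolding height_def by (rule Max_ge[OF fin]) auto
  have "height p \<in> level p ` {0..length p}" unfolding height_def by (rule Max_in[OF fin ne])
  then show "\<exists>k\<le>length p. level p k = height p" by auto
qed

lemma height_nonneg: "0 \<le> height p"
  using height_facts(1)[of 0 p] by simp

lemma height_le: "height p \<le> int (length p)"
  using height_facts(2)[of p] level_le by (metis of_nat_mono order_trans)

definition amp :: "step list \<Rightarrow> int" where
  "amp p = 2 * height p + (if has_hstep_on p (height p) then 1 else 0)"

lemma W0_eq: "W P n 0 = {p \<in> motzkin_paths n. amp p + 3 \<le> int P}"
proof (intro equalityI subsetI)
  fix p assume p: "p \<in> W P n 0"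
  then have len: "length p = n" and L: "\<forall>k\<le>n. 0 \<le> level p k \<and> 2*level p k + 3 \<le> int P"
    and E: "level p n = 0" and HH: "\<forall>k<n. p!k = H \<longrightarrow> 2*level p k + 4 \<le> int P"
    by (auto simp: W_def)
  have mp: "p \<in> motzkin_paths n" using len L E by (auto simp: motzkin_paths_def motzkin_def)
  obtain k where k: "k \<le> n" "level p k = height p" using height_facts(2)[of p] len by auto
  have h3: "2*height p + 3 \<le> int P" using L k by auto
  have "amp p + 3 \<le> int P"
  proof (cases "has_hstep_on p (height p)")
    case True
    then obtain k' where "k' < n" "p!k' = H" "level p k' = height p"
      using len by (auto simp: has_hstep_on_def)
    then have "2*height p + 4 \<le> int P" using HH by auto
    then show ?thesis using True by (simp add: amp_def)
  next
    case False then show ?thesis using h3 by (simp add: amp_def)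
  qed
  then show "p \<in> {p \<in> motzkin_paths n. amp p + 3 \<le> int P}" using mp by simp
next
  fix p assume p: "p \<in> {p \<in> motzkin_paths n. amp p + 3 \<le> int P}"
  then have len: "length p = n" and m: "motzkin p" and a: "amp p + 3 \<le> int P"
    by (auto simp: motzkin_paths_def)
  have h3: "2*height p + 3 \<le> int P" using a by (simp add: amp_def split: if_splits)
  have L: "\<forall>k\<le>n. 0 \<le> level p k \<and> 2*level p k + 3 \<le> int P"
    using m len h3 height_facts(1)[of _ p] by (force simp: motzkin_def)
  have HH: "\<forall>k<n. p!k = H \<longrightarrow> 2*level p k + 4 \<le> int P"
  proof (intro allI impI)
    fix k assume k: "k < n" "p!k = H"
    have le: "level p k \<le> height p" using height_facts(1)[of k p] k len by simp
    show "2*level p k + 4 \<le> int P"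
    proof (cases "level p k = height p")
      case True
      then have "has_hstep_on p (height p)" using k len by (auto simp: has_hstep_on_def)
      then show ?thesis using a True by (simp add: amp_def)
    next
      case False then show ?thesis using le h3 by simp
    qed
  qed
  show "p \<in> W P n 0" using len L HH m by (simp add: W_def motzkin_def)
qed

lemma finite_MP: "finite (motzkin_paths n)"
  by (rule finite_subset[OF _ finite_len[of n]]) (auto simp: motzkin_paths_def)

lemma amp_bound: "p \<in> motzkin_paths n \<Longrightarrow> 0 \<le> amp p \<and> amp p \<le> 2*int n + 1"
  using height_le[of p] height_nonneg[of p] by (auto simp: amp_def motzkin_paths_def)

definition cc :: "nat \<Rightarrow> nat \<Rightarrow> nat" where "cc n P = card (W P n 0)"

lemma cc_step: "0 \<le> m \<Longrightarrow> real (cc n (nat (m+3))) = real (cc n (nat (m+2))) + real (card {p \<in> motzkin_paths n. amp p = m})"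
proof -
  assume m: "0 \<le> m"
  have "W (nat (m+3)) n 0 = W (nat (m+2)) n 0 \<union> {p \<in> motzkin_paths n. amp p = m}"
    using m by (auto simp: W0_eq)
  moreover have "W (nat (m+2)) n 0 \<inter> {p \<in> motzkin_paths n. amp p = m} = {}"
    using m by (auto simp: W0_eq)
  ultimately show ?thesis unfolding cc_def
    by (simp add: card_Un_disjoint finite_W finite_MP)
qed

lemma cc_M: "int P \<ge> 2*int n + 4 \<Longrightarrow> cc n P = M n"
proof -
  assume P: "int P \<ge> 2*int n + 4"
  have "W P n 0 = motzkin_paths n" using P amp_bound[of _ n] by (force simp: W0_eq)
  then show ?thesis by (simp add: cc_def M_def)
qed

lemma card_UN_amp:
  fixes f :: "nat \<Rightarrow> int"
  assumes "inj f"
  shows "card (\<Union>i\<in>{..n}. {p \<in> motzkin_paths n. amp p = f i}) = (\<Sum>i\<in>{..n}. card {p \<in> motzkin_paths n. amp p = f i})"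
  by (rule card_UN_disjoint) (auto simp: finite_MP dest: injD[OF assms])

lemma b_decomp: "real (b n) = (\<Sum>i\<in>{..n}. real (card {p \<in> motzkin_paths n. amp p = 2*int i}))"
proof -
  have "{p \<in> motzkin_paths n. \<not> has_hstep_on p (height p)} = (\<Union>i\<in>{..n}. {p \<in> motzkin_paths n. amp p = 2*int i})"
  proof (intro equalityI subsetI)
    fix p assume p: "p \<in> {p \<in> motzkin_paths n. \<not> has_hstep_on p (height p)}"
    then have "amp p = 2 * int (nat (height p))" "nat (height p) \<le> n"
      using height_nonneg[of p] height_le[of p] by (auto simp: amp_def motzkin_paths_def)
    then show "p \<in> (\<Union>i\<in>{..n}. {p \<in> motzkin_paths n. amp p = 2*int i})" using p by (intro UN_I[of "nat (height p)"]) auto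
  next
    fix p assume "p \<in> (\<Union>i\<in>{..n}. {p \<in> motzkin_paths n. amp p = 2*int i})"
    then show "p \<in> {p \<in> motzkin_paths n. \<not> has_hstep_on p (height p)}"
      by (auto simp: amp_def split: if_splits) presburger
  qed
  then have "b n = card (\<Union>i\<in>{..n}. {p \<in> motzkin_paths n. amp p = 2*int i})" by (simp add: b_def)
  also have "\<dots> = (\<Sum>i\<in>{..n}. card {p \<in> motzkin_paths n. amp p = 2*int i})"
    by (rule card_UN_amp) (auto intro: injI)
  finally show ?thesis by simp
qed

lemma Mb_decomp: "real (M n) - real (b n) = (\<Sum>i\<in>{..n}. real (card {p \<in> motzkin_paths n. amp p = 2*int i + 1}))"
proof -
  have split: "motzkin_paths n = {p \<in> motzkin_paths n. \<not> has_hstep_on p (height p)} \<union> {p \<in> motzkin_paths n. has_hstep_on p (height p)}" by auto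
  have "M n = b n + card {p \<in> motzkin_paths n. has_hstep_on p (height p)}"
    unfolding M_def b_def by (subst split, subst card_Un_disjoint) (auto simp: finite_MP)
  moreover have "{p \<in> motzkin_paths n. has_hstep_on p (height p)} = (\<Union>i\<in>{..n}. {p \<in> motzkin_paths n. amp p = 2*int i + 1})"
  proof (intro equalityI subsetI)
    fix p assume p: "p \<in> {p \<in> motzkin_paths n. has_hstep_on p (height p)}"
    then have "amp p = 2 * int (nat (height p)) + 1" "nat (height p) \<le> n"
      using height_nonneg[of p] height_le[of p] by (auto simp: amp_def motzkin_paths_def)
    then show "p \<in> (\<Union>i\<in>{..n}. {p \<in> motzkin_paths n. amp p = 2*int i + 1})" using p by (intro UN_I[of "nat (height p)"]) auto
  next
    fix p assume "p \<in> (\<Union>i\<in>{..n}. {p \<in> motzkin_paths n. amp p = 2*int i + 1})"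
    then show "p \<in> {p \<in> motzkin_paths n. has_hstep_on p (height p)}"
      by (auto simp: amp_def split: if_splits) presburger
  qed
  moreover have "card (\<Union>i\<in>{..n}. {p \<in> motzkin_paths n. amp p = 2*int i + 1}) = (\<Sum>i\<in>{..n}. card {p \<in> motzkin_paths n. amp p = 2*int i + 1})"
    by (rule card_UN_amp) (auto intro: injI)
  ultimately show ?thesis by simp
qed

lemma twob_minus_M:
  "2 * real (b n) - real (M n) = (\<Sum>i\<in>{..n}. 2 * real (cc n (2*i+3)) - real (cc n (2*i+2)) - real (cc n (2*i+4)))"
proof -
  have e1: "real (card {p \<in> motzkin_paths n. amp p = 2*int i}) = real (cc n (2*i+3)) - real (cc n (2*i+2))" for i
    using cc_step[of "2*int i" n] by (simp add: nat_add_distrib nat_mult_distrib)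
  have e2: "real (card {p \<in> motzkin_paths n. amp p = 2*int i + 1}) = real (cc n (2*i+4)) - real (cc n (2*i+3))" for i
    using cc_step[of "2*int i + 1" n] by (simp add: nat_add_distrib nat_mult_distrib add.commute)
  have "2 * real (b n) - real (M n) = real (b n) - (real (M n) - real (b n))" by simp
  also have "\<dots> = (\<Sum>i\<in>{..n}. (real (cc n (2*i+3)) - real (cc n (2*i+2))) - (real (cc n (2*i+4)) - real (cc n (2*i+3))))"
    unfolding Mb_decomp by (simp only: b_decomp e1 e2 sum_subtractf)
  also have "\<dots> = (\<Sum>i\<in>{..n}. 2 * real (cc n (2*i+3)) - real (cc n (2*i+2)) - real (cc n (2*i+4)))"
    by (intro sum.cong) auto
  finally show ?thesis .
qed

definition phi :: "nat \<Rightarrow> real \<Rightarrow> real" where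
  "phi n t = sin t ^ 2 * ((1 + 2*cos t)/3)^n"

definition s :: "nat \<Rightarrow> nat \<Rightarrow> real" where
  "s n P = 4/real P * (\<Sum>j\<in>{1..P div 2}. phi n (2*pi*real j/real P))"

lemma sum_half:
  fixes f :: "nat \<Rightarrow> real"
  assumes P: "P > 0" and f0: "f 0 = 0" and fs: "\<And>i. i \<le> P \<Longrightarrow> f (P - i) = f i"
    and fh: "even P \<Longrightarrow> f (P div 2) = 0"
  shows "(\<Sum>j<P. f j) = 2 * (\<Sum>j\<in>{1..P div 2}. f j)"
proof -
  have U: "{..<P} = {0} \<union> ({1..P div 2} \<union> {P div 2 + 1..<P})" using P by auto
  have "(\<Sum>j<P. f j) = f 0 + ((\<Sum>j\<in>{1..P div 2}. f j) + (\<Sum>j\<in>{P div 2 + 1..<P}. f j))"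
    unfolding U using P by (subst sum.union_disjoint, auto)+
  also have "(\<Sum>j\<in>{P div 2 + 1..<P}. f j) = (\<Sum>i\<in>{1..<P - P div 2}. f i)"
  proof (rule sym, rule sum.reindex_bij_witness[of _ "\<lambda>j. P - j" "\<lambda>i. P - i"])
    show "\<And>i. i \<in> {1..<P - P div 2} \<Longrightarrow> f (P - i) = f i" using fs by auto
  qed auto
  also have "(\<Sum>i\<in>{1..<P - P div 2}. f i) = (\<Sum>j\<in>{1..P div 2}. f j)"
  proof (rule sum.mono_neutral_left)
    show "\<forall>i\<in>{1..P div 2} - {1..<P - P div 2}. f i = 0"
    proof
      fix i assume "i \<in> {1..P div 2} - {1..<P - P div 2}"
      then have "even P" "i = P div 2" by auto presburger+
      then show "f i = 0" using fh by simp
    qed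
  qed auto
  finally show ?thesis using f0 by simp
qed

lemma V0_s: assumes P: "P > 0" shows "V P n 0 = 3^n * s n P"
proof -
  define f where "f = (\<lambda>j. phi n (2*pi*real j/real P))"
  have t: "(1+2*cos(alpha P j))^n * sin(alpha P j) * sin(real_of_int (0+1) * alpha P j) = 3^n * f j" for j
    by (simp add: f_def phi_def alpha_def power2_eq_square power_divide)
  have fs: "f (P - i) = f i" if "i \<le> P" for i
  proof -
    have "2*pi*real (P-i)/real P = 2*pi - 2*pi*real i/real P" using that P by (simp add: of_nat_diff field_simps)
    then show ?thesis by (simp add: f_def phi_def)
  qed
  have fh: "f (P div 2) = 0" if "even P"
  proof -
    have "2*pi*real (P div 2)/real P = pi" using that P by (auto simp: field_simps elim!: evenE)
    then show ?thesis by (simp add: f_def phi_def)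
  qed
  have "V P n 0 = 2/real P * (\<Sum>j<P. 3^n * f j)" unfolding V_def t by simp
  also have "\<dots> = 2/real P * 3^n * (\<Sum>j<P. f j)" by (simp add: sum_distrib_left mult.assoc)
  also have "(\<Sum>j<P. f j) = 2 * (\<Sum>j\<in>{1..P div 2}. f j)"
    apply (rule sum_half[OF P])
    subgoal by (simp add: f_def phi_def)
    subgoal by (rule fs)
    subgoal by (rule fh)
    done
  finally show ?thesis by (simp add: s_def f_def)
qed

lemma cc_s: assumes "P \<ge> 2" shows "real (cc n P) = 3^n * s n P"
proof (cases "P = 2")
  case True
  have "W 2 n 0 = {}" by (auto simp: W_def)
  moreover have "s n 2 = 0" by (simp add: s_def phi_def)
  ultimately show ?thesis using True by (simp add: cc_def)
next
  case False
  then have "P \<ge> 3" using assms by simp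
  then show ?thesis using card_W_V[of 0 P n] V0_s[of P n] by (simp add: cc_def)
qed

lemma cos_ge_quad: "(x::real) \<ge> 0 \<Longrightarrow> 1 - x^2/2 \<le> cos x"
proof -
  assume x: "x \<ge> 0"
  have "(\<lambda>t. cos t - 1 + t^2/2) 0 \<le> (\<lambda>t. cos t - 1 + t^2/2) x"
  proof (rule DERIV_nonneg_imp_nondecreasing[OF x])
    fix t :: real assume t: "0 \<le> t" "t \<le> x"
    show "\<exists>y. ((\<lambda>t. cos t - 1 + t^2/2) has_real_derivative y) (at t) \<and> 0 \<le> y"
    proof (intro exI conjI)
      show "((\<lambda>t. cos t - 1 + t^2/2) has_real_derivative (t - sin t)) (at t)"
        by (auto intro!: derivative_eq_intros simp: power2_eq_square)
      show "0 \<le> t - sin t" using sin_x_le_x[OF t(1)] by simp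
    qed
  qed
  then show ?thesis by simp
qed

lemma sin_ge_cubic: "(x::real) \<ge> 0 \<Longrightarrow> x - x^3/6 \<le> sin x"
proof -
  assume x: "x \<ge> 0"
  have "(\<lambda>t. sin t - t + t^3/6) 0 \<le> (\<lambda>t. sin t - t + t^3/6) x"
  proof (rule DERIV_nonneg_imp_nondecreasing[OF x])
    fix t :: real assume t: "0 \<le> t" "t \<le> x"
    show "\<exists>y. ((\<lambda>t. sin t - t + t^3/6) has_real_derivative y) (at t) \<and> 0 \<le> y"
    proof (intro exI conjI)
      show "((\<lambda>t. sin t - t + t^3/6) has_real_derivative (cos t - 1 + t^2/2)) (at t)"
        by (auto intro!: derivative_eq_intros simp: power2_eq_square)
      show "0 \<le> cos t - 1 + t^2/2" using cos_ge_quad[OF t(1)] by simp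
    qed
  qed
  then show ?thesis by simp
qed

lemma cos_le_quart: "(x::real) \<ge> 0 \<Longrightarrow> cos x \<le> 1 - x^2/2 + x^4/24"
proof -
  assume x: "x \<ge> 0"
  have "(\<lambda>t. 1 - t^2/2 + t^4/24 - cos t) 0 \<le> (\<lambda>t. 1 - t^2/2 + t^4/24 - cos t) x"
  proof (rule DERIV_nonneg_imp_nondecreasing[OF x])
    fix t :: real assume t: "0 \<le> t" "t \<le> x"
    show "\<exists>y. ((\<lambda>t. 1 - t^2/2 + t^4/24 - cos t) has_real_derivative y) (at t) \<and> 0 \<le> y"
    proof (intro exI conjI)
      show "((\<lambda>t. 1 - t^2/2 + t^4/24 - cos t) has_real_derivative (- t + t^3/6 + sin t)) (at t)"
        by (auto intro!: derivative_eq_intros simp: power2_eq_square)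
      show "0 \<le> - t + t^3/6 + sin t" using sin_ge_cubic[OF t(1)] by simp
    qed
  qed
  then show ?thesis by simp
qed

lemma second_diff:
  fixes f f1 f2 :: "real \<Rightarrow> real"
  assumes d1: "\<And>x. a \<le> x \<Longrightarrow> x \<le> a + 2 \<Longrightarrow> (f has_real_derivative f1 x) (at x)"
    and d2: "\<And>x. a \<le> x \<Longrightarrow> x \<le> a + 2 \<Longrightarrow> (f1 has_real_derivative f2 x) (at x)"
    and B: "\<And>x. a \<le> x \<Longrightarrow> x \<le> a + 2 \<Longrightarrow> \<bar>f2 x\<bar> \<le> B"
  shows "\<bar>f a - 2 * f (a+1) + f (a+2)\<bar> \<le> B"
proof -
  define k where "k = (\<lambda>t. f (t+1) - f t)"
  have "\<exists>z. a < z \<and> z < a+1 \<and> k (a+1) - k a = ((a+1) - a) * (f1 (z+1) - f1 z)"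
  proof (rule MVT2)
    fix x assume x: "a \<le> x" "x \<le> a+1"
    show "(k has_real_derivative f1 (x+1) - f1 x) (at x)"
    proof -
      have "((\<lambda>z. f (z+1)) has_real_derivative f1 (x+1)) (at x)"
        using d1[of "x+1"] x by (simp add: DERIV_shift)
      moreover have "(f has_real_derivative f1 x) (at x)" using d1[of x] x by simp
      ultimately show ?thesis unfolding k_def by (rule DERIV_diff)
    qed
  qed simp
  then obtain z where z: "a < z" "z < a+1" "k (a+1) - k a = f1 (z+1) - f1 z" by auto
  have "\<exists>w. z < w \<and> w < z+1 \<and> f1 (z+1) - f1 z = ((z+1) - z) * f2 w"
    by (rule MVT2) (use z in \<open>auto intro!: d2\<close>)
  then obtain w where w: "z < w" "w < z+1" "f1 (z+1) - f1 z = f2 w" by auto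
  have "f a - 2 * f (a+1) + f (a+2) = k (a+1) - k a" by (simp add: k_def add.assoc)
  also have "\<dots> = f2 w" using z w by simp
  finally show ?thesis using B[of w] z w by simp
qed

definition cf :: "real \<Rightarrow> real" where "cf t = (1 + 2*cos t)/3"

definition phi1 :: "nat \<Rightarrow> real \<Rightarrow> real" where
  "phi1 m t = 2*sin t*cos t*cf t^(m+2) - (2*real(m+2)/3)*sin t^3*cf t^(m+1)"

definition phi2 :: "nat \<Rightarrow> real \<Rightarrow> real" where
  "phi2 m t = 2*(cos t^2 - sin t^2)*cf t^(m+2) - (4*real(m+2)/3)*sin t^2*cos t*cf t^(m+1)
     - 2*real(m+2)*sin t^2*cos t*cf t^(m+1) + (4*real(m+2)*real(m+1)/9)*sin t^4*cf t^m"

lemma phi_cf: "phi n t = sin t^2 * cf t^n" by (simp add: phi_def cf_def)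

lemma cf_deriv: "(cf has_real_derivative (-2*sin t/3)) (at t)"
  unfolding cf_def by (auto intro!: derivative_eq_intros)

lemma cfpow_deriv: "((\<lambda>t. cf t^(k+1)) has_real_derivative real(k+1)*cf t^k*(-2*sin t/3)) (at t)"
  by (rule DERIV_cong[OF DERIV_power[OF cf_deriv, where n="k+1"]]) simp

lemma sin_pow_deriv: "((\<lambda>t. sin t^(k+1)) has_real_derivative real(k+1)*sin t^k*cos t) (at t)"
  by (rule DERIV_cong[OF DERIV_power[OF DERIV_sin, where n="k+1"]]) simp

lemma phi_deriv: "(phi (m+2) has_real_derivative phi1 m t) (at t)"
proof -
  have e: "phi (m+2) = (\<lambda>t. sin t^(1+1) * cf t^(m+1+1))"
    by (simp add: fun_eq_iff phi_cf numeral_2_eq_2)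
  show ?thesis unfolding e
    by (rule DERIV_cong[OF DERIV_mult[OF sin_pow_deriv cfpow_deriv]])
       (simp add: phi1_def algebra_simps power2_eq_square power3_eq_cube)
qed

lemma phi1_deriv: "(phi1 m has_real_derivative phi2 m t) (at t)"
proof -
  have e: "phi1 m = (\<lambda>t. (2*sin t*cos t) * cf t^(m+1+1) - (2*real(m+2)/3) * (sin t^(2+1) * cf t^(m+1)))"
    by (simp add: fun_eq_iff phi1_def numeral_2_eq_2 numeral_3_eq_3)
  have d0: "((\<lambda>t. 2*sin t*cos t) has_real_derivative 2*(cos t*cos t - sin t*sin t)) (at t)"
    by (auto intro!: derivative_eq_intros simp: algebra_simps)
  have d1: "((\<lambda>t. (2*sin t*cos t) * cf t^(m+1+1)) has_real_derivative
      (2*(cos t*cos t - sin t*sin t)) * cf t^(m+1+1) + (real(m+1+1)*cf t^(m+1)*(-2*sin t/3)) * (2*sin t*cos t)) (at t)"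
    by (rule DERIV_mult[OF d0 cfpow_deriv])
  have d2: "((\<lambda>t. sin t^(2+1) * cf t^(m+1)) has_real_derivative
      (real(2+1)*sin t^2*cos t) * cf t^(m+1) + (real(m+1)*cf t^m*(-2*sin t/3)) * sin t^(2+1)) (at t)"
    by (rule DERIV_mult[OF sin_pow_deriv cfpow_deriv])
  have d3: "((\<lambda>t. (2*sin t*cos t) * cf t^(m+1+1) - (2*real(m+2)/3) * (sin t^(2+1) * cf t^(m+1))) has_real_derivative
     ((2*(cos t*cos t - sin t*sin t)) * cf t^(m+1+1) + (real(m+1+1)*cf t^(m+1)*(-2*sin t/3)) * (2*sin t*cos t))
     - (2*real(m+2)/3) * ((real(2+1)*sin t^2*cos t) * cf t^(m+1) + (real(m+1)*cf t^m*(-2*sin t/3)) * sin t^(2+1))) (at t)"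
    by (intro DERIV_diff d1 DERIV_cmult d2)
  show ?thesis unfolding e
    by (rule DERIV_cong[OF d3]) (unfold phi2_def, simp add: eval_nat_numeral field_simps)
qed

lemma inv_deriv: "x \<noteq> 0 \<Longrightarrow> ((\<lambda>x. u/x) has_real_derivative (-u/x^2)) (at (x::real))"
  by (auto intro!: derivative_eq_intros simp: power2_eq_square)

lemma comp_deriv:
  assumes dg: "\<And>t. (g has_real_derivative g1 t) (at t)" and x: "x \<noteq> 0"
  shows "((\<lambda>x. g (u/x)) has_real_derivative g1 (u/x) * (-u/x^2)) (at x)"
  by (rule DERIV_chain2[OF dg inv_deriv[OF x]])

lemma hderiv1:
  assumes dg: "\<And>t. (g has_real_derivative g1 t) (at t)" and x: "x \<noteq> 0"
  shows "((\<lambda>x. 4/x * g(u/x)) has_real_derivative (-4/x^2*g(u/x) - 4*u/x^3*g1(u/x))) (at x)"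
proof -
  have a: "((\<lambda>x. 4/x) has_real_derivative (-4/x^2)) (at x)" by (rule inv_deriv[OF x])
  show ?thesis
    by (rule DERIV_cong[OF DERIV_mult[OF a comp_deriv[OF dg x]]])
       (use x in \<open>simp add: field_simps power2_eq_square power3_eq_cube\<close>)
qed

lemma hderiv2:
  assumes dg: "\<And>t. (g has_real_derivative g1 t) (at t)"
    and dg1: "\<And>t. (g1 has_real_derivative g2 t) (at t)" and x: "x \<noteq> 0"
  shows "((\<lambda>x. -4/x^2*g(u/x) - 4*u/x^3*g1(u/x)) has_real_derivative
     (8*g(u/x) + 16*(u/x)*g1(u/x) + 4*(u/x)^2*g2(u/x))/x^3) (at x)"
proof -
  have a: "((\<lambda>x. -4/x^2) has_real_derivative (8/x^3)) (at x)"
    using x by (auto intro!: derivative_eq_intros simp: field_simps power2_eq_square power3_eq_cube)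
  have b: "((\<lambda>x. 4*u/x^3) has_real_derivative (-12*u/x^4)) (at x)"
    using x by (auto intro!: derivative_eq_intros simp: field_simps eval_nat_numeral)
  show ?thesis
    by (rule DERIV_cong[OF DERIV_diff[OF DERIV_mult[OF a comp_deriv[OF dg x]] DERIV_mult[OF b comp_deriv[OF dg1 x]]]])
       (use x in \<open>simp add: field_simps eval_nat_numeral\<close>)
qed

lemma tb:
  fixes S Cc c X th k :: real
  assumes "\<bar>S\<bar> \<le> th" "\<bar>Cc\<bar> \<le> 1" "\<bar>c\<bar> \<le> 1" "0 \<le> X"
  shows "\<bar>k * S^p * Cc^q * c^r * X\<bar> \<le> \<bar>k\<bar> * th^p * X"
proof -
  have th: "0 \<le> th" using assms(1) by linarith
  have "\<bar>k * S^p * Cc^q * c^r * X\<bar> = \<bar>k\<bar> * \<bar>S\<bar>^p * (\<bar>Cc\<bar>^q * \<bar>c\<bar>^r) * X"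
    using assms(4) by (simp add: abs_mult power_abs mult.assoc)
  also have "\<dots> \<le> \<bar>k\<bar> * th^p * 1 * X"
  proof (intro mult_right_mono mult_mono mult_left_mono power_mono)
    show "\<bar>Cc\<bar>^q * \<bar>c\<bar>^r \<le> 1" using assms(2,3) by (simp add: power_le_one mult_le_one)
  qed (use assms th in auto)
  finally show ?thesis by simp
qed

lemma E_bound:
  fixes th :: real
  assumes th: "0 \<le> th" "th \<le> pi/2"
  shows "\<bar>8*phi (m+2) th + 16*th*phi1 m th + 4*th^2*phi2 m th\<bar>
     \<le> 48*(th^2 + real (m+2)*th^4 + real (m+2)^2*th^6) * cf th^m"
proof -
  define S where "S = sin th"
  define Cc where "Cc = cos th"
  define c where "c = cf th"
  define X where "X = c^m"
  define n where "n = real (m+2)"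
  have S: "\<bar>S\<bar> \<le> th" unfolding S_def using abs_sin_x_le_abs_x[of th] th by simp
  have Cc: "\<bar>Cc\<bar> \<le> 1" unfolding Cc_def by simp
  have cpos: "0 \<le> Cc" unfolding Cc_def using th by (intro cos_ge_zero) auto
  have c: "\<bar>c\<bar> \<le> 1" "0 \<le> c" unfolding c_def cf_def using cpos Cc_def by auto
  have X: "0 \<le> X" unfolding X_def using c by simp
  have n: "1 \<le> n" unfolding n_def by simp
  have p0: "phi (m+2) th = 1 * S^2 * Cc^0 * c^2 * X"
    by (simp add: phi_cf S_def c_def X_def power_add power2_eq_square)
  have p1: "phi1 m th = 2 * S^1 * Cc^1 * c^2 * X + (-2*n/3) * S^3 * Cc^0 * c^1 * X"
    by (simp add: phi1_def S_def Cc_def c_def X_def n_def power_add power2_eq_square field_simps)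
  have p2: "phi2 m th = 2 * S^0 * Cc^2 * c^2 * X + (-2) * S^2 * Cc^0 * c^2 * X
     + (-4*n/3) * S^2 * Cc^1 * c^1 * X + (-2*n) * S^2 * Cc^1 * c^1 * X + (4*n*(n-1)/9) * S^4 * Cc^0 * c^0 * X"
    by (simp add: phi2_def S_def Cc_def c_def X_def n_def power_add field_simps power2_eq_square)
  note T = tb[OF S Cc c(1) X]
  have A1: "\<bar>phi (m+2) th\<bar> \<le> th^2 * X" using T[of 1 2 0 2] p0 by simp
  have A2: "\<bar>phi1 m th\<bar> \<le> 2*th*X + (2*n/3)*th^3*X"
  proof -
    have "\<bar>phi1 m th\<bar> \<le> \<bar>2 * S^1 * Cc^1 * c^2 * X\<bar> + \<bar>(-2*n/3) * S^3 * Cc^0 * c^1 * X\<bar>"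
      unfolding p1 by (rule abs_triangle_ineq)
    also have "\<dots> \<le> \<bar>2::real\<bar> * th^1 * X + \<bar>-2*n/3\<bar> * th^3 * X" by (intro add_mono T)
    finally show ?thesis using n by simp
  qed
  have A3: "\<bar>phi2 m th\<bar> \<le> 2*X + 2*th^2*X + (4*n/3)*th^2*X + (2*n)*th^2*X + (4*n*(n-1)/9)*th^4*X"
  proof -
    have "\<bar>phi2 m th\<bar> \<le> \<bar>2 * S^0 * Cc^2 * c^2 * X\<bar> + \<bar>(-2) * S^2 * Cc^0 * c^2 * X\<bar>
     + \<bar>(-4*n/3) * S^2 * Cc^1 * c^1 * X\<bar> + \<bar>(-2*n) * S^2 * Cc^1 * c^1 * X\<bar> + \<bar>(4*n*(n-1)/9) * S^4 * Cc^0 * c^0 * X\<bar>"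
      unfolding p2 by (intro order_trans[OF abs_triangle_ineq] add_mono order_refl)
    also have "\<dots> \<le> \<bar>2::real\<bar> * th^0 * X + \<bar>-2::real\<bar> * th^2 * X + \<bar>-4*n/3\<bar> * th^2 * X + \<bar>-2*n\<bar> * th^2 * X
       + \<bar>4*n*(n-1)/9\<bar> * th^4 * X" by (intro add_mono T)
    finally show ?thesis using n by simp
  qed
  have "\<bar>8*phi (m+2) th + 16*th*phi1 m th + 4*th^2*phi2 m th\<bar>
      \<le> 8*\<bar>phi (m+2) th\<bar> + 16*th*\<bar>phi1 m th\<bar> + 4*th^2*\<bar>phi2 m th\<bar>"
    using th by (intro order_trans[OF abs_triangle_ineq] add_mono order_trans[OF abs_triangle_ineq])
                (auto simp: abs_mult)
  also have "\<dots> \<le> 8*(th^2 * X) + 16*th*(2*th*X + (2*n/3)*th^3*X)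
      + 4*th^2*(2*X + 2*th^2*X + (4*n/3)*th^2*X + (2*n)*th^2*X + (4*n*(n-1)/9)*th^4*X)"
    using th by (intro add_mono mult_left_mono A1 A2 A3) auto
  also have "\<dots> = X * (48*th^2 + (24*n+8)*th^4 + (16/9*n*(n-1))*th^6)"
    by (simp add: algebra_simps eval_nat_numeral)
  also have "\<dots> \<le> X * (48*th^2 + 48*n*th^4 + 48*n^2*th^6)"
  proof (intro mult_left_mono add_mono order_refl X)
    show "(24*n+8)*th^4 \<le> 48*n*th^4" using n th by (intro mult_right_mono) auto
    show "(16/9*n*(n-1))*th^6 \<le> 48*n^2*th^6" using n th
      by (intro mult_right_mono) (auto simp: power2_eq_square algebra_simps)
  qed auto
  finally show ?thesis by (simp add: X_def c_def n_def algebra_simps)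
qed

lemma cf_bounds:
  fixes t :: real
  assumes t: "0 \<le> t" "t \<le> pi/2"
  shows "1/3 \<le> cf t" "cf t \<le> exp (-(t^2)/6)"
proof -
  have "0 \<le> cos t" using t by (intro cos_ge_zero) auto
  then show "1/3 \<le> cf t" by (simp add: cf_def)
  have t2: "t^2 \<le> 6"
  proof -
    have "t \<le> 2" using t pi_less_4 by linarith
    then have "t^2 \<le> 2^2" using t by (intro power_mono) auto
    then show ?thesis by simp
  qed
  have "t^4/24 \<le> t^2/4"
  proof -
    have "t^4 = t^2 * t^2" by (simp add: eval_nat_numeral)
    also have "\<dots> \<le> t^2 * 6" using t2 by (intro mult_left_mono) auto
    finally show ?thesis by simp
  qed
  then have "cos t \<le> 1 - t^2/4" using cos_le_quart[OF t(1)] by simp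
  then have "cf t \<le> 1 + (-(t^2)/6)" by (simp add: cf_def)
  also have "\<dots> \<le> exp (-(t^2)/6)" by (rule exp_ge_add_one_self)
  finally show "cf t \<le> exp (-(t^2)/6)" .
qed

lemma cfpow_bound:
  fixes t :: real
  assumes t: "0 \<le> t" "t \<le> pi/2"
  shows "cf t^m \<le> exp (- real m * t^2/6)"
proof -
  have "cf t^m \<le> exp (-(t^2)/6)^m" using cf_bounds[OF t] by (intro power_mono) auto
  also have "\<dots> = exp (real m * (-(t^2)/6))" by (simp only: exp_of_nat_mult)
  also have "\<dots> = exp (- real m * t^2/6)" by (simp add: algebra_simps)
  finally show ?thesis .
qed

lemma lin_exp: "0 \<le> (y::real) \<Longrightarrow> y \<le> 72 * exp (y/72)"
  using exp_ge_add_one_self[of "y/72"] by linarith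

definition K0 :: real where "K0 = 72 + 72^2 + 72^3"

lemma poly_exp:
  fixes y :: real assumes y: "0 \<le> y"
  shows "(y + y^2 + y^3) * exp (-y/12) \<le> K0 * exp (-y/24)"
proof -
  have e1: "y \<le> 72 * exp (y/72)" by (rule lin_exp[OF y])
  have a: "exp (y/72) \<le> exp (y/24)" using y by simp
  have b: "exp (y/72)^2 \<le> exp (y/24)"
  proof -
    have "exp (y/72)^2 = exp (real 2*(y/72))" by (simp only: exp_of_nat_mult)
    also have "\<dots> \<le> exp (y/24)" using y by simp
    finally show ?thesis .
  qed
  have c: "exp (y/72)^3 = exp (y/24)"
  proof -
    have "exp (y/72)^3 = exp (real 3*(y/72))" by (simp only: exp_of_nat_mult)
    also have "\<dots> = exp (y/24)" by simp
    finally show ?thesis .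
  qed
  have y1: "y \<le> 72 * exp (y/24)" using e1 a by linarith
  have y2: "y^2 \<le> 72^2 * exp (y/24)"
  proof -
    have "y^2 \<le> (72 * exp (y/72))^2" using e1 y by (intro power_mono) auto
    also have "\<dots> = 72^2 * exp (y/72)^2" by (simp add: power_mult_distrib)
    also have "\<dots> \<le> 72^2 * exp (y/24)" using b by simp
    finally show ?thesis .
  qed
  have y3: "y^3 \<le> 72^3 * exp (y/24)"
  proof -
    have "y^3 \<le> (72 * exp (y/72))^3" using e1 y by (intro power_mono) auto
    also have "\<dots> = 72^3 * exp (y/24)" by (simp add: power_mult_distrib c)
    finally show ?thesis .
  qed
  have "(y + y^2 + y^3) * exp (-y/12) \<le> (K0 * exp (y/24)) * exp (-y/12)"
    using y1 y2 y3 by (intro mult_right_mono) (auto simp: K0_def algebra_simps)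
  also have "\<dots> = K0 * (exp (y/24) * exp (-y/12))" by simp
  also have "exp (y/24) * exp (-y/12) = exp (-y/24)" by (simp add: exp_add[symmetric])
  finally show ?thesis .
qed

lemma E_final:
  fixes t :: real
  assumes t: "0 \<le> t" "t \<le> pi/2" and m: "2 \<le> m"
  shows "\<bar>8*phi (m+2) t + 16*t*phi1 m t + 4*t^2*phi2 m t\<bar>
     \<le> 48*K0/real (m+2) * exp (- real (m+2) * t^2/24)"
proof -
  define n where "n = real (m+2)"
  define y where "y = n * t^2"
  have n: "n \<ge> 4" "n > 0" using m by (auto simp: n_def)
  have y: "0 \<le> y" using n by (simp add: y_def)
  have "\<bar>8*phi (m+2) t + 16*t*phi1 m t + 4*t^2*phi2 m t\<bar>
     \<le> 48*(t^2 + n*t^4 + n^2*t^6) * cf t^m" using E_bound[OF t, of m] by (simp add: n_def)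
  also have "\<dots> \<le> 48*(t^2 + n*t^4 + n^2*t^6) * exp (- real m * t^2/6)"
    using cfpow_bound[OF t, of m] n by (intro mult_left_mono) auto
  also have "\<dots> \<le> 48*(t^2 + n*t^4 + n^2*t^6) * exp (- y/12)"
  proof (intro mult_left_mono)
    have "real m \<ge> n/2" using m by (simp add: n_def)
    then have "real m * t^2 \<ge> n/2 * t^2" by (intro mult_right_mono) auto
    then show "exp (- real m * t^2/6) \<le> exp (- y/12)" by (simp add: y_def)
  qed (use n in \<open>auto intro!: add_nonneg_nonneg mult_nonneg_nonneg\<close>)
  also have "48*(t^2 + n*t^4 + n^2*t^6) = 48/n * (y + y^2 + y^3)"
    using n by (simp add: y_def field_simps eval_nat_numeral)
  also have "48/n * (y + y^2 + y^3) * exp (-y/12) = 48/n * ((y + y^2 + y^3) * exp (-y/12))" by simp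
  also have "\<dots> \<le> 48/n * (K0 * exp (-y/24))" using poly_exp[OF y] n by (intro mult_left_mono) auto
  also have "48/n * (K0 * exp (-y/24)) = 48*K0/real (m+2) * exp (- real (m+2) * t^2/24)"
    by (simp add: y_def n_def algebra_simps)
  finally show ?thesis .
qed

definition hf :: "nat \<Rightarrow> nat \<Rightarrow> real \<Rightarrow> real" where
  "hf n j x = 4/x * phi n (2*pi*real j/x)"

lemma s_hf: "s n Q = (\<Sum>j\<in>{1..Q div 2}. hf n j (real Q))"
  by (simp add: s_def hf_def sum_distrib_left)

lemma geo_exp:
  fixes a :: real assumes a: "a > 0"
  shows "(\<Sum>j\<in>{1..N}. exp (- a * real j)) \<le> 1/a"
proof -
  define r where "r = exp (-a)"
  have r: "0 < r" "r < 1" using a by (auto simp: r_def)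
  have "(\<Sum>j\<in>{1..N}. exp (- a * real j)) = (\<Sum>j\<in>{1..N}. r^j)"
    by (intro sum.cong refl) (simp add: r_def exp_of_nat_mult[symmetric] mult.commute)
  also have "\<dots> = (\<Sum>j<N. r^(Suc j))"
    by (rule sum.reindex_bij_witness[of _ "Suc" "\<lambda>j. j - 1"]) auto
  also have "\<dots> = r * (\<Sum>j<N. r^j)" by (simp add: sum_distrib_left)
  also have "\<dots> = r * ((1 - r^N)/(1 - r))"
    using r by (subst geometric_sum) (auto simp: field_simps)
  also have "\<dots> \<le> r * (1/(1-r))"
    using r by (intro mult_left_mono divide_right_mono) auto
  also have "\<dots> = 1/(exp a - 1)" using r a by (simp add: r_def field_simps exp_minus)
  also have "\<dots> \<le> 1/a"
  proof -
    have "a \<le> exp a - 1" using exp_ge_add_one_self[of a] by linarith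
    then show ?thesis using a by (intro divide_left_mono) auto
  qed
  finally show ?thesis .
qed

lemma phi_crude:
  fixes t :: real assumes "pi/3 \<le> t" "t \<le> pi"
  shows "\<bar>phi n t\<bar> \<le> (2/3)^n"
proof -
  have "cos t \<le> cos (pi/3)" using assms by (intro cos_monotone_0_pi_le) auto
  then have c: "cos t \<le> 1/2" by (simp add: cos_60)
  have "\<bar>1 + 2*cos t\<bar> \<le> 2" using c cos_ge_minus_one[of t] by (simp only: abs_le_iff) linarith
  then have "\<bar>(1 + 2*cos t)/3\<bar> \<le> 2/3" by simp
  then have "\<bar>(1 + 2*cos t)/3\<bar>^n \<le> (2/3)^n" by (intro power_mono) auto
  moreover have "sin t^2 \<le> 1" by (simp add: abs_square_le_1)
  ultimately have "sin t^2 * \<bar>(1 + 2*cos t)/3\<bar>^n \<le> 1 * (2/3)^n"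
    by (intro mult_mono) auto
  then show ?thesis by (simp add: phi_def abs_mult power_abs)
qed

lemma hf_d2:
  fixes Pr :: real
  assumes m: "2 \<le> m" and j: "1 \<le> j" and P: "2 \<le> Pr" and jP: "4 * real j \<le> Pr"
  shows "\<bar>hf (m+2) j Pr - 2 * hf (m+2) j (Pr+1) + hf (m+2) j (Pr+2)\<bar>
     \<le> 48*K0/(real (m+2) * Pr^3) * exp (- (real (m+2) * (2*pi)^2 / (24*(Pr+2)^2)) * real j)"
proof -
  define u where "u = 2*pi*real j"
  define n where "n = real (m+2)"
  define a where "a = n * (2*pi)^2 / (24*(Pr+2)^2)"
  have hf_eq: "hf (m+2) j = (\<lambda>x. 4/x * phi (m+2) (u/x))" by (simp add: fun_eq_iff hf_def u_def)
  have u: "u > 0" using j by (simp add: u_def)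
  show ?thesis
    unfolding hf_eq a_def[symmetric, unfolded n_def]
  proof (rule second_diff)
    fix x assume x: "Pr \<le> x" "x \<le> Pr + 2"
    then have x0: "x \<noteq> 0" "x > 0" using P by auto
    show "((\<lambda>x. 4/x * phi (m+2) (u/x)) has_real_derivative (-4/x^2*phi (m+2) (u/x) - 4*u/x^3*phi1 m (u/x))) (at x)"
      by (rule hderiv1[OF phi_deriv x0(1)])
    show "((\<lambda>x. -4/x^2*phi (m+2) (u/x) - 4*u/x^3*phi1 m (u/x)) has_real_derivative
      (8*phi (m+2) (u/x) + 16*(u/x)*phi1 m (u/x) + 4*(u/x)^2*phi2 m (u/x))/x^3) (at x)"
      by (rule hderiv2[OF phi_deriv phi1_deriv x0(1)])
    define t where "t = u/x"
    have t0: "0 \<le> t" using u x0 by (simp add: t_def)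
    have tpi: "t \<le> pi/2"
    proof -
      have "t \<le> u/Pr" unfolding t_def using u x P by (intro divide_left_mono) auto
      also have "\<dots> \<le> pi/2" using jP P by (simp add: u_def field_simps)
      finally show ?thesis .
    qed
    have tlow: "u/(Pr+2) \<le> t" unfolding t_def using u x P by (intro divide_left_mono) auto
    have "\<bar>(8*phi (m+2) t + 16*t*phi1 m t + 4*t^2*phi2 m t)/x^3\<bar>
        = \<bar>8*phi (m+2) t + 16*t*phi1 m t + 4*t^2*phi2 m t\<bar> / x^3" using x0 by simp
    also have "\<dots> \<le> (48*K0/n * exp (- n * t^2/24)) / x^3"
      using E_final[OF t0 tpi m] x0 by (intro divide_right_mono) (auto simp: n_def)
    also have "\<dots> \<le> (48*K0/n * exp (- a * real j)) / Pr^3"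
    proof (intro frac_le mult_left_mono)
      have "(u/(Pr+2))^2 \<le> t^2" using tlow u P by (intro power_mono) auto
      then have "n * (u/(Pr+2))^2 \<le> n * t^2" by (intro mult_left_mono) (auto simp: n_def)
      moreover have "a * real j \<le> n * (u/(Pr+2))^2 / 24"
      proof -
        have "real j \<le> real j ^ 2" using j by (simp add: power2_eq_square)
        then have "a * real j \<le> a * real j^2"
          by (intro mult_left_mono) (auto simp: a_def n_def)
        also have "\<dots> = n * (u/(Pr+2))^2 / 24" by (simp add: a_def u_def power_divide power_mult_distrib)
        finally show ?thesis .
      qed
      ultimately show "exp (- n * t^2/24) \<le> exp (- a * real j)" by simp
      show "0 \<le> 48*K0/n" by (simp add: n_def K0_def)
      show "0 < Pr^3" using P by simp
      show "Pr^3 \<le> x^3" using x P by (intro power_mono) auto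
    qed (simp add: n_def K0_def)
    also have "\<dots> = 48*K0/(n * Pr^3) * exp (- a * real j)" by simp
    finally show "\<bar>(8*phi (m+2) (u/x) + 16*(u/x)*phi1 m (u/x) + 4*(u/x)^2*phi2 m (u/x))/x^3\<bar>
        \<le> 48*K0/(real (m+2) * Pr^3) * exp (- a * real j)" by (simp add: t_def n_def)
  qed
qed

lemma hf_crude:
  assumes j: "1 \<le> j" and Q: "Q > 0" and jQ: "j \<le> Q div 2" and j6: "Q \<le> 6*j" and PQ: "P \<le> Q" and P: "P > 0"
  shows "\<bar>hf n j (real Q)\<bar> \<le> 4/real P * (2/3)^n"
proof -
  have t1: "pi/3 \<le> 2*pi*real j/real Q"
  proof -
    have "real Q \<le> 6 * real j" using j6 by linarith
    then show ?thesis using Q by (simp add: field_simps)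
  qed
  have t2: "2*pi*real j/real Q \<le> pi"
  proof -
    have "2 * real j \<le> real Q" using jQ by linarith
    then show ?thesis using Q by (simp add: field_simps)
  qed
  have "\<bar>hf n j (real Q)\<bar> = 4/real Q * \<bar>phi n (2*pi*real j/real Q)\<bar>" using Q by (simp add: hf_def abs_mult)
  also have "\<dots> \<le> 4/real P * (2/3)^n"
    using phi_crude[OF t1 t2, of n] PQ P Q by (intro mult_mono frac_le) auto
  finally show ?thesis .
qed

lemma s_d2:
  assumes m: "2 \<le> m" and P: "2 \<le> P"
  shows "\<bar>s (m+2) P - 2 * s (m+2) (P+1) + s (m+2) (P+2)\<bar>
     \<le> 288*K0/(real (m+2)^2 * real P) + 16*(2/3)^(m+2)"
proof -
  define n where "n = m+2"
  define N where "N = (P+2) div 2"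
  define w where "w = (\<lambda>Q j. if j \<le> Q div 2 then hf n j (real Q) else 0)"
  have sw: "s n Q = (\<Sum>j\<in>{1..N}. w Q j)" if "Q \<le> P+2" for Q
  proof -
    have "{1..N} \<inter> {j. j \<le> Q div 2} = {1..Q div 2}" using that by (auto simp: N_def)
    then have "s n Q = (\<Sum>j\<in>{1..N} \<inter> {j. j \<le> Q div 2}. hf n j (real Q))" by (simp add: s_hf)
    also have "\<dots> = (\<Sum>j\<in>{1..N}. w Q j)" by (subst sum.inter_restrict) (auto simp: w_def)
    finally show ?thesis .
  qed
  define d where "d = (\<lambda>j. w P j - 2 * w (P+1) j + w (P+2) j)"
  have "s n P - 2 * s n (P+1) + s n (P+2) = (\<Sum>j\<in>{1..N}. d j)"
    by (simp add: sw d_def sum.distrib sum_subtractf sum_distrib_left)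
  define A where "A = {1..N} \<inter> {j. 4*j \<le> P}"
  define B where "B = {1..N} - {j. 4*j \<le> P}"
  have "\<bar>\<Sum>j\<in>{1..N}. d j\<bar> \<le> (\<Sum>j\<in>{1..N}. \<bar>d j\<bar>)" by (rule sum_abs)
  also have "\<dots> = (\<Sum>j\<in>A. \<bar>d j\<bar>) + (\<Sum>j\<in>B. \<bar>d j\<bar>)"
    unfolding A_def B_def by (rule sum.Int_Diff) simp
  finally have main: "\<bar>s n P - 2 * s n (P+1) + s n (P+2)\<bar> \<le> (\<Sum>j\<in>A. \<bar>d j\<bar>) + (\<Sum>j\<in>B. \<bar>d j\<bar>)"
    using \<open>s n P - 2 * s n (P+1) + s n (P+2) = (\<Sum>j\<in>{1..N}. d j)\<close> by simp
  define a where "a = real n * (2*pi)^2 / (24*(real P+2)^2)"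
  define C1 where "C1 = 48*K0/(real n * real P^3)"
  have a: "a > 0" using P by (simp add: a_def n_def)
  have dA: "\<bar>d j\<bar> \<le> C1 * exp (- a * real j)" if "j \<in> A" for j
  proof -
    have j: "1 \<le> j" "4*j \<le> P" using that by (auto simp: A_def)
    have w: "w Q j = hf n j (real Q)" if "P \<le> Q" for Q using j that by (auto simp: w_def)
    have "\<bar>d j\<bar> = \<bar>hf (m+2) j (real P) - 2 * hf (m+2) j (real P+1) + hf (m+2) j (real P+2)\<bar>"
      by (simp add: d_def w n_def add.commute)
    also have "\<dots> \<le> C1 * exp (- a * real j)"
      using hf_d2[OF m j(1), of "real P"] P j by (simp add: C1_def a_def n_def)
    finally show ?thesis .
  qed
  have SA: "(\<Sum>j\<in>A. \<bar>d j\<bar>) \<le> 288*K0/(real n^2 * real P)"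
  proof -
    have "(\<Sum>j\<in>A. \<bar>d j\<bar>) \<le> (\<Sum>j\<in>A. C1 * exp (- a * real j))" by (rule sum_mono) (rule dA)
    also have "\<dots> \<le> (\<Sum>j\<in>{1..N}. C1 * exp (- a * real j))"
      by (rule sum_mono2) (auto simp: A_def C1_def K0_def)
    also have "\<dots> = C1 * (\<Sum>j\<in>{1..N}. exp (- a * real j))" by (simp add: sum_distrib_left)
    also have "\<dots> \<le> C1 * (1/a)" using geo_exp[OF a] by (intro mult_left_mono) (auto simp: C1_def K0_def)
    also have "\<dots> \<le> 288*K0/(real n^2 * real P)"
    proof -
      have P2: "(real P + 2)^2 \<le> 4 * real P^2"
      proof -
        have "real P + 2 \<le> 2 * real P" using P by simp
        then have "(real P + 2)^2 \<le> (2 * real P)^2" by (intro power_mono) auto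
        then show ?thesis by (simp add: power_mult_distrib)
      qed
      have pi2: "4 \<le> (2*pi)^2/4"
      proof -
        have "2*2 \<le> pi*pi" using pi_ge_two by (intro mult_mono) auto
        then show ?thesis by (simp add: power2_eq_square)
      qed
      have "1/a = 24*(real P+2)^2 / (real n * (2*pi)^2)" by (simp add: a_def)
      also have "\<dots> \<le> 24*(4 * real P^2) / (real n * 16)"
      proof (rule frac_le)
        show "real n * 16 \<le> real n * (2*pi)^2" using pi2 by (intro mult_left_mono) auto
      qed (use P2 P in \<open>auto simp: n_def\<close>)
      finally have ia: "1/a \<le> 6 * real P^2 / real n" by simp
      have "C1 * (1/a) \<le> C1 * (6 * real P^2 / real n)" using ia by (intro mult_left_mono) (auto simp: C1_def K0_def)
      also have "\<dots> = 288*K0/(real n^2 * real P)" using P by (simp add: C1_def field_simps power2_eq_square power3_eq_cube)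
      finally show ?thesis .
    qed
    finally show ?thesis .
  qed
  have wB: "\<bar>w Q j\<bar> \<le> 4/real P * (2/3)^n" if "j \<in> B" "P \<le> Q" "Q \<le> P+2" for Q j
  proof (cases "j \<le> Q div 2")
    case True
    have j: "1 \<le> j" "P < 4*j" using that by (auto simp: B_def)
    show ?thesis using hf_crude[OF j(1) _ True _ that(2)] True j that P by (auto simp: w_def)
  next
    case False then show ?thesis by (simp add: w_def)
  qed
  have dB: "\<bar>d j\<bar> \<le> 16/real P * (2/3)^n" if "j \<in> B" for j
  proof -
    have "\<bar>d j\<bar> \<le> \<bar>w P j\<bar> + 2*\<bar>w (P+1) j\<bar> + \<bar>w (P+2) j\<bar>"
      unfolding d_def by (intro order_trans[OF abs_triangle_ineq] add_mono order_trans[OF abs_triangle_ineq4]) (auto simp: abs_mult)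
    also have "\<dots> \<le> 4/real P * (2/3)^n + 2*(4/real P * (2/3)^n) + 4/real P * (2/3)^n"
      using wB[OF that] by (intro add_mono mult_left_mono) auto
    finally show ?thesis by simp
  qed
  have SB: "(\<Sum>j\<in>B. \<bar>d j\<bar>) \<le> 16*(2/3)^n"
  proof -
    have "(\<Sum>j\<in>B. \<bar>d j\<bar>) \<le> (\<Sum>j\<in>B. 16/real P * (2/3)^n)" by (rule sum_mono) (rule dB)
    also have "\<dots> = real (card B) * (16/real P * (2/3)^n)" by simp
    also have "\<dots> \<le> real P * (16/real P * (2/3)^n)"
    proof (intro mult_right_mono)
      have "card B \<le> card {1..N}" by (rule card_mono) (auto simp: B_def)
      also have "\<dots> \<le> P" using P by (simp add: N_def)
      finally show "real (card B) \<le> real P" by simp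
    qed auto
    also have "\<dots> = 16*(2/3)^n" using P by simp
    finally show ?thesis .
  qed
  show ?thesis using main SA SB by (simp add: n_def)
qed

lemma phi_ge: "- ((1/3)^n) \<le> phi n t"
proof (cases "cf t \<ge> 0")
  case True then show ?thesis by (simp add: phi_cf order_trans[of _ 0])
next
  case False
  have h: "-1 \<le> cos t" by simp
  have c: "\<bar>cf t\<bar> \<le> 1/3"
  proof -
    have neg: "1 + 2*cos t < 0" using False unfolding cf_def by simp
    have "\<bar>1 + 2*cos t\<bar> = - (1 + 2*cos t)" using neg by (rule abs_of_neg)
    also have "\<dots> \<le> 1" using h by linarith
    finally have "\<bar>1 + 2*cos t\<bar> \<le> 1" .
    then show ?thesis by (simp add: cf_def)
  qed
  have "\<bar>phi n t\<bar> = sin t^2 * \<bar>cf t\<bar>^n" by (simp add: phi_cf abs_mult power_abs)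
  also have "\<dots> \<le> 1 * (1/3)^n"
    using c by (intro mult_mono power_mono) (auto simp: abs_square_le_1)
  finally show ?thesis by simp
qed

lemma phi_lower_small:
  assumes n: "1 \<le> n" and t: "0 \<le> t" "t \<le> 1/sqrt (real n)"
  shows "t^2/6 \<le> phi n t"
proof -
  have sq: "1 \<le> sqrt (real n)" using n by simp
  have t1: "t \<le> 1" using t sq by (meson order_trans divide_le_eq_1 zero_less_one less_le_trans)
  have t2: "t^2 \<le> 1/real n"
  proof -
    have "t^2 \<le> (1/sqrt (real n))^2" using t by (intro power_mono) auto
    also have "\<dots> = 1/real n" using n by (simp add: power_divide)
    finally show ?thesis .
  qed
  have "t^3/6 \<le> t/2"
  proof -
    have "t^3 = t * t^2" by (simp add: power3_eq_cube power2_eq_square)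
    also have "\<dots> \<le> t * 1" using t t1 by (intro mult_left_mono) (auto simp: power_le_one)
    finally show ?thesis using t by simp
  qed
  then have s: "t/2 \<le> sin t" using sin_ge_cubic[OF t(1)] by simp
  have s2: "t^2/4 \<le> sin t^2"
  proof -
    have "(t/2)^2 \<le> sin t^2" using s t by (intro power_mono) auto
    then show ?thesis by (simp add: power_divide)
  qed
  have c1: "1 - 1/(3*real n) \<le> cf t"
  proof -
    have "1 - t^2/2 \<le> cos t" by (rule cos_ge_quad[OF t(1)])
    then have "1 - t^2/3 \<le> cf t" by (simp add: cf_def)
    moreover have "t^2/3 \<le> 1/(3*real n)" using t2 by simp
    ultimately show ?thesis by linarith
  qed
  have "2/3 \<le> (1 - 1/(3*real n))^n"
  proof -
    have "1 + real n * (- (1/(3*real n))) \<le> (1 + (- (1/(3*real n))))^n"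
      by (rule Bernoulli_inequality) (use n in \<open>simp add: field_simps\<close>)
    then show ?thesis using n by simp
  qed
  also have "\<dots> \<le> cf t^n"
    using c1 n by (intro power_mono) (auto simp: field_simps)
  finally have c2: "2/3 \<le> cf t^n" .
  have "t^2/4 * (2/3) \<le> sin t^2 * cf t^n" using s2 c2 t by (intro mult_mono) auto
  then show ?thesis by (simp add: phi_cf)
qed

definition Lb :: "nat \<Rightarrow> real" where "Lb n = 4/(4499 * real n * sqrt (real n)) - 2/3^n"

lemma s_lower:
  assumes n: "1 \<le> n"
  defines "Nc \<equiv> nat \<lceil>32 * sqrt (real n)\<rceil>"
  shows "Lb n \<le> s n (Nc * n)" and "2 * n + 4 \<le> Nc * n"
proof -
  define P0 where "P0 = Nc * n"
  have sq: "1 \<le> sqrt (real n)" using n by simp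
  have Nc1: "32 * sqrt (real n) \<le> real Nc" unfolding Nc_def by (rule of_nat_ceiling)
  have Nc2: "real Nc \<le> 33 * sqrt (real n)"
  proof -
    have "real Nc = real_of_int \<lceil>32 * sqrt (real n)\<rceil>" unfolding Nc_def using sq
      by (simp add: of_nat_nat)
    also have "\<dots> \<le> 32 * sqrt (real n) + 1" by simp
    finally show ?thesis using sq by linarith
  qed
  have Nc32: "32 \<le> real Nc" using Nc1 sq by linarith
  then have Nc0: "Nc > 0" by simp
  have NcS: "0 < real Nc * sqrt (real n)" using Nc0 sq by simp
  have P0r: "real P0 = real Nc * real n" by (simp add: P0_def)
  show "2 * n + 4 \<le> Nc * n"
  proof -
    have "32 \<le> Nc" using Nc32 by simp
    then have "32 * n \<le> Nc * n" by simp
    then show ?thesis using n by linarith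
  qed
  have P0pos: "real P0 > 0" using Nc0 n by (simp add: P0r)
  define J where "J = {n+1..4*n}"
  have JS: "J \<subseteq> {1..P0 div 2}"
  proof -
    have "32 * n \<le> P0" using Nc32 by (simp add: P0_def)
    then show ?thesis by (auto simp: J_def)
  qed
  have Jphi: "1/(409 * real n) \<le> phi n (2*pi*real j/real P0)" if "j \<in> J" for j
  proof -
    have j: "n+1 \<le> j" "j \<le> 4*n" using that by (auto simp: J_def)
    define t where "t = 2*pi*real j/real P0"
    have t0: "0 \<le> t" using P0pos by (simp add: t_def)
    have tup: "t \<le> 1/sqrt (real n)"
    proof -
      have "t \<le> 2*pi*(4*real n)/real P0" unfolding t_def using j P0pos by (intro divide_right_mono) auto
      also have "\<dots> = 8*pi/real Nc" using n by (simp add: P0r field_simps)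
      also have "\<dots> \<le> 8*pi/(32 * sqrt (real n))" using Nc1 sq Nc0 by (intro divide_left_mono) (auto intro!: mult_pos_pos)
      also have "\<dots> \<le> 1/sqrt (real n)" using pi_less_4 sq by (simp add: field_simps)
      finally show ?thesis .
    qed
    have tlow: "4/(33 * sqrt (real n)) \<le> t"
    proof -
      have "4/(33 * sqrt (real n)) \<le> 2*pi/(33 * sqrt (real n))" using pi_ge_two sq by (intro divide_right_mono) auto
      also have "\<dots> \<le> 2*pi/real Nc" using Nc2 Nc32 NcS by (intro divide_left_mono) auto
      also have "\<dots> = 2*pi*real n/real P0" using n by (simp add: P0r field_simps)
      also have "\<dots> \<le> t" unfolding t_def using j P0pos by (intro divide_right_mono) auto
      finally show ?thesis .
    qed
    have "(4/(33 * sqrt (real n)))^2 \<le> t^2" using tlow sq by (intro power_mono) auto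
    then have "16/(1089 * real n) \<le> t^2" by (simp add: power_divide power_mult_distrib)
    then have "1/(409 * real n) \<le> t^2/6" using n by (simp add: field_simps)
    also have "\<dots> \<le> phi n t" by (rule phi_lower_small[OF n t0 tup])
    finally show ?thesis by (simp add: t_def)
  qed
  have "(\<Sum>j\<in>{1..P0 div 2}. phi n (2*pi*real j/real P0))
      = (\<Sum>j\<in>{1..P0 div 2} - J. phi n (2*pi*real j/real P0)) + (\<Sum>j\<in>J. phi n (2*pi*real j/real P0))"
    by (rule sum.subset_diff[OF JS]) simp
  also have "\<dots> \<ge> (\<Sum>j\<in>{1..P0 div 2} - J. - ((1/3)^n)) + (\<Sum>j\<in>J. 1/(409 * real n))"
    by (intro add_mono sum_mono phi_ge Jphi) auto
  finally have S1: "(\<Sum>j\<in>{1..P0 div 2} - J. - ((1/3)^n)) + (\<Sum>j\<in>J. 1/(409 * real n))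
     \<le> (\<Sum>j\<in>{1..P0 div 2}. phi n (2*pi*real j/real P0))" .
  have cJ: "(\<Sum>j\<in>J. 1/(409 * real n)) = 3/409" using n by (simp add: J_def)
  have cR: "real (card ({1..P0 div 2} - J)) \<le> real P0 / 2"
  proof -
    have "card ({1..P0 div 2} - J) \<le> card {1..P0 div 2}" by (rule card_mono) auto
    then have "real (card ({1..P0 div 2} - J)) \<le> real (P0 div 2)" by simp
    also have "\<dots> \<le> real P0 / 2" by linarith
    finally show ?thesis .
  qed
  have "(\<Sum>j\<in>{1..P0 div 2} - J. - ((1/3::real)^n)) \<ge> - (real P0/2 * (1/3)^n)"
    using cR by (simp add: mult_right_mono)
  then have S2: "3/409 - real P0/2 * (1/3)^n \<le> (\<Sum>j\<in>{1..P0 div 2}. phi n (2*pi*real j/real P0))"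
    using S1 cJ by linarith
  have "s n P0 = 4/real P0 * (\<Sum>j\<in>{1..P0 div 2}. phi n (2*pi*real j/real P0))" by (simp add: s_def)
  also have "\<dots> \<ge> 4/real P0 * (3/409 - real P0/2 * (1/3)^n)"
    using S2 P0pos by (intro mult_left_mono) auto
  finally have S3: "12/(409 * real P0) - 2 * (1/3)^n \<le> s n P0" using P0pos by (simp add: field_simps)
  have "4/(4499 * real n * sqrt (real n)) \<le> 12/(409 * real P0)"
  proof -
    have "409 * real P0 \<le> 409 * (33 * sqrt (real n) * real n)" using Nc2 n by (simp add: P0r mult_right_mono)
    then have "12/(409 * (33 * sqrt (real n) * real n)) \<le> 12/(409 * real P0)"
      using P0pos Nc32 sq by (intro divide_left_mono) (auto intro!: mult_pos_pos)
    moreover have "12/(409 * (33 * sqrt (real n) * real n)) = 4/(4499 * real n * sqrt (real n))"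
      using n by (simp add: field_simps)
    ultimately show ?thesis by simp
  qed
  moreover have "2 * (1/3::real)^n = 2/3^n" by (simp add: power_divide)
  ultimately show "Lb n \<le> s n (Nc * n)" using S3 by (simp add: Lb_def P0_def)
qed

lemma harm: "(\<Sum>i\<in>{..n}. 1/(real i+1)) \<le> 1 + ln (real n + 1)"
proof (induction n)
  case 0 then show ?case by simp
next
  case (Suc n)
  have "ln ((real n + 1)/(real n + 2)) \<le> (real n + 1)/(real n + 2) - 1"
    by (rule ln_le_minus_one) simp
  also have "\<dots> = - (1/(real n + 2))" by (simp add: field_simps)
  finally have "1/(real n + 2) \<le> ln (real n + 2) - ln (real n + 1)"
    by (simp add: ln_div)
  then show ?case using Suc by (simp add: add.commute add.left_commute)
qed

definition U :: "nat \<Rightarrow> real" where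
  "U n = 144*K0*(1 + ln (real n + 1))/real n^2 + 16*(real n+1)*(2/3)^n"

lemma main_bound:
  assumes n: "4 \<le> n"
  shows "\<bar>2 * real (b n) - real (M n)\<bar> \<le> 3^n * U n"
proof -
  define m where "m = n - 2"
  have m: "n = m+2" "2 \<le> m" using n by (auto simp: m_def)
  have trm: "\<bar>2 * real (cc n (2*i+3)) - real (cc n (2*i+2)) - real (cc n (2*i+4))\<bar>
      \<le> 3^n * (288*K0/(real n^2 * real (2*i+2)) + 16*(2/3)^n)" for i
  proof -
    define P where "P = 2*i+2"
    have c2: "real (cc n P) = 3^n * s n P" by (rule cc_s) (simp add: P_def)
    have c3: "real (cc n (P+1)) = 3^n * s n (P+1)" by (rule cc_s) (simp add: P_def)
    have c4: "real (cc n (P+2)) = 3^n * s n (P+2)" by (rule cc_s) (simp add: P_def)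
    have e3: "2*i+3 = P+1" "2*i+4 = P+2" by (simp_all add: P_def)
    have "2 * real (cc n (2*i+3)) - real (cc n (2*i+2)) - real (cc n (2*i+4))
        = - (3^n * (s n P - 2 * s n (P+1) + s n (P+2)))"
      unfolding e3 P_def[symmetric] c2 c3 c4 by (simp add: algebra_simps)
    then have "\<bar>2 * real (cc n (2*i+3)) - real (cc n (2*i+2)) - real (cc n (2*i+4))\<bar>
        = 3^n * \<bar>s n (2*i+2) - 2 * s n (2*i+2+1) + s n (2*i+2+2)\<bar>"
      by (simp only: abs_minus_cancel abs_mult P_def) simp
    also have "\<dots> \<le> 3^n * (288*K0/(real n^2 * real (2*i+2)) + 16*(2/3)^n)"
      using s_d2[OF m(2), of "2*i+2"] m by (intro mult_left_mono) auto
    finally show ?thesis .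
  qed
  have "\<bar>2 * real (b n) - real (M n)\<bar>
      \<le> (\<Sum>i\<in>{..n}. \<bar>2 * real (cc n (2*i+3)) - real (cc n (2*i+2)) - real (cc n (2*i+4))\<bar>)"
    unfolding twob_minus_M by (rule sum_abs)
  also have "\<dots> \<le> (\<Sum>i\<in>{..n}. 3^n * (288*K0/(real n^2 * real (2*i+2)) + 16*(2/3)^n))"
    by (rule sum_mono) (rule trm)
  also have "\<dots> = 3^n * (144*K0/real n^2 * (\<Sum>i\<in>{..n}. 1/(real i+1)) + (real n+1) * (16*(2/3)^n))"
  proof -
    have t1: "288*K0/(real n^2 * real (2*i+2)) = 144*K0/real n^2 * (1/(real i+1))" for i
    proof -
      have np: "0 < real n^2" using n by simp
      have e: "real n^2 * real (2*i+2) = 2 * (real n^2 * (real i + 1))" by (simp add: algebra_simps)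
      have "288*K0/(real n^2 * real (2*i+2)) = 288*K0/(2 * (real n^2 * (real i + 1)))" by (simp only: e)
      also have "\<dots> = 288*K0/2/(real n^2 * (real i + 1))" by (simp only: divide_divide_eq_left)
      also have "\<dots> = 144*K0/(real n^2 * (real i + 1))" by simp
      also have "\<dots> = 144*K0/real n^2 * (1/(real i+1))" by simp
      finally show ?thesis .
    qed
    have "(\<Sum>i\<in>{..n}. 3^n * (288*K0/(real n^2 * real (2*i+2)) + 16*(2/3)^n))
       = (\<Sum>i\<in>{..n}. 3^n * (144*K0/real n^2 * (1/(real i+1)) + 16*(2/3)^n))" by (simp only: t1)
    also have "\<dots> = 3^n * (\<Sum>i\<in>{..n}. 144*K0/real n^2 * (1/(real i+1)) + 16*(2/3)^n)"
      by (simp only: sum_distrib_left)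
    also have "\<dots> = 3^n * (144*K0/real n^2 * (\<Sum>i\<in>{..n}. 1/(real i+1)) + (real n+1) * (16*(2/3)^n))"
      by (simp only: sum.distrib sum_distrib_left[symmetric]) simp
    finally show ?thesis .
  qed
  also have "\<dots> \<le> 3^n * (144*K0/real n^2 * (1 + ln (real n + 1)) + (real n+1) * (16*(2/3)^n))"
    using harm[of n] by (intro mult_left_mono add_mono order_refl) (auto simp: K0_def)
  also have "\<dots> = 3^n * U n" by (simp add: U_def)
  finally show ?thesis .
qed

lemma M_lower:
  assumes n: "1 \<le> n"
  shows "3^n * Lb n \<le> real (M n)"
proof -
  define Nc where "Nc = nat \<lceil>32 * sqrt (real n)\<rceil>"
  have "2*n+4 \<le> Nc*n" using s_lower(2)[OF n] by (simp add: Nc_def)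
  then have "int (Nc*n) \<ge> 2*int n + 4" by linarith
  then have "M n = cc n (Nc*n)" by (simp add: cc_M)
  moreover have "real (cc n (Nc*n)) = 3^n * s n (Nc*n)"
    by (rule cc_s) (use \<open>2*n+4 \<le> Nc*n\<close> in linarith)
  moreover have "Lb n \<le> s n (Nc*n)" using s_lower(1)[OF n] by (simp add: Nc_def)
  ultimately show ?thesis by simp
qed

lemma lim_ratio: "(\<lambda>n. U n / (2 * Lb n)) \<longlonglongrightarrow> 0"
proof -
  have e: "U n / (2 * Lb n) = (144*(72 + 72^2 + 72^3)*(1 + ln (real n + 1))/real n^2 + 16*(real n+1)*2^n/3^n)
     / (2*(4/(4499 * real n * sqrt (real n)) - 2/3^n))" for n
    by (simp add: U_def Lb_def K0_def power_divide)
  show ?thesis unfolding e by real_asymp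
qed

lemma Lb_pos: "eventually (\<lambda>n. 0 < Lb n) sequentially"
  unfolding Lb_def by real_asymp

theorem mainTheorem6:
  shows "(\<lambda>n. real (b n) / real (M n)) \<longlonglongrightarrow> 1 / 2"
proof -
  have ev: "eventually (\<lambda>n. \<bar>real (b n) / real (M n) - 1/2\<bar> \<le> U n / (2 * Lb n)) sequentially"
    using Lb_pos eventually_ge_at_top[of 4]
  proof eventually_elim
    case (elim n)
    have L: "0 < Lb n" and n: "4 \<le> n" using elim by auto
    have hML: "3^n * Lb n \<le> real (M n)" using M_lower n by simp
    have "0 < 3^n * Lb n" using L by simp
    then have Mpos: "0 < real (M n)" using hML by linarith
    have "\<bar>real (b n) / real (M n) - 1/2\<bar> = \<bar>2 * real (b n) - real (M n)\<bar> / (2 * real (M n))"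
      using Mpos by (simp add: field_simps abs_divide)
    also have "\<dots> \<le> (3^n * U n) / (2 * (3^n * Lb n))"
      using main_bound[OF n] hML L Mpos by (intro frac_le) auto
    also have "\<dots> = U n / (2 * Lb n)" by simp
    finally show ?case .
  qed
  have "(\<lambda>n. real (b n) / real (M n) - 1/2) \<longlonglongrightarrow> 0"
  proof (rule tendsto_sandwich[of "\<lambda>n. - (U n / (2 * Lb n))" _ _ "\<lambda>n. U n / (2 * Lb n)"])
    show "eventually (\<lambda>n. - (U n / (2 * Lb n)) \<le> real (b n) / real (M n) - 1/2) sequentially"
      using ev by eventually_elim (simp add: abs_le_iff)
    show "eventually (\<lambda>n. real (b n) / real (M n) - 1/2 \<le> U n / (2 * Lb n)) sequentially"
      using ev by eventually_elim (simp add: abs_le_iff)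
    show "(\<lambda>n. - (U n / (2 * Lb n))) \<longlonglongrightarrow> 0" using tendsto_minus[OF lim_ratio] by simp
    show "(\<lambda>n. U n / (2 * Lb n)) \<longlonglongrightarrow> 0" by (rule lim_ratio)
  qed
  then show ?thesis by (simp add: LIM_zero_iff)
qed

end
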